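(* Let $(\rho,m,\theta)$ be a smooth positive triple on $(0,T]\times\omega$ with $m=0$ on $\partial\omega$ which satisfies, for all $t$ and all $q\in L^2(\omega)$, $v\in H_0(\mathrm{div};\omega)$, $w\in H^1(\omega)$, \begin{align*} (\partial_t\rho,q)+(\partial_x m,q)&=0,\\ \Big(\frac1\rho\partial_t m-\frac{m}{2\rho^2}\partial_t\rho,v\Big)-\Big(\frac{m^2}{2\rho^2}+(\rho P)_\rho,\partial_x v\Big)+\Big(\frac{m}{2\rho^2}\partial_x m-P_\theta\partial_x\theta,v\Big)&=0,\\ \Big(\rho\,\partial_t e-\frac p\rho\partial_t\rho,\frac w\theta\Big)-\Big(Q-\theta P_\theta,\partial_x\Big(m\frac w\theta\Big)\Big)+\Big(mP_\theta\partial_x\theta,\frac w\theta\Big)&=0. \end{align*} Then \[ \frac{d}{dt}\int_\omega\rho\,dx=0,\qquad \frac{d}{dt}\int_\omega E\,dx=0,\qquad \frac{d}{dt}\int_\omega\rho s\,dx=0. \]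
   Context: Let $\omega=[v_1,v_2]\subset\mathbb R$ be a bounded closed interval; $(u,v)=\int_\omega uv\,dx$, $H^1(\omega)=\{w\in L^2:\partial_x w\in L^2\}$, $H_0(\mathrm{div};\omega)=\{v\in L^2:\partial_x v\in L^2,\ v=0\text{ on }\partial\omega\}$. Subscripts denote partial derivatives. The constitutive relations are given through a pressure potential $P\in C^3((0,\infty)^2)$ and a thermal potential $Q\in C^2((0,\infty))$ (function of $\theta$ only), satisfying for all $\rho,\theta>0$: $P_\rho\ge 0$, $(\rho P_\rho)_\rho\ge 0$, and $Q_\theta-\theta P_{\theta\theta}\ge \underline c_v>0$. The pressure is $p=\rho^2P_\rho$, the specific internal energy $e=P-\theta P_\theta+Q$, the specific entropy $s(\rho,\theta)=\int_1^\theta\frac{Q_\theta(t)}{t}dt-P_\theta(\rho,\theta)$, and the total energy density $E=\frac{m^2}{2\rho}+\rho e$, all evaluated at $(\rho,\theta)$. A smooth positive triple is $(\rho,m,\theta)\in C^1((0,T]\times\omega)^3$ with $\rho,\theta>0$. *)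

theory Defs
  imports "HOL-Analysis.Analysis"
begin

definition pd1 :: "(real \<times> real \<Rightarrow> real) \<Rightarrow> real \<times> real \<Rightarrow> real" where
  "pd1 f z = deriv (\<lambda>r. f (r, snd z)) (fst z)"

definition pd2 :: "(real \<times> real \<Rightarrow> real) \<Rightarrow> real \<times> real \<Rightarrow> real" where
  "pd2 f z = deriv (\<lambda>s. f (fst z, s)) (snd z)"

fun Ck :: "nat \<Rightarrow> (real \<times> real) set \<Rightarrow> (real \<times> real \<Rightarrow> real) \<Rightarrow> bool" where
  "Ck 0 U f = continuous_on U f"
| "Ck (Suc k) U f = (f differentiable_on U \<and> Ck k U (pd1 f) \<and> Ck k U (pd2 f))"

fun Ck1 :: "nat \<Rightarrow> real set \<Rightarrow> (real \<Rightarrow> real) \<Rightarrow> bool" where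
  "Ck1 0 U f = continuous_on U f"
| "Ck1 (Suc k) U f = (f differentiable_on U \<and> Ck1 k U (deriv f))"

definition C1_on :: "(real \<times> real) set \<Rightarrow> (real \<Rightarrow> real \<Rightarrow> real) \<Rightarrow>
    (real \<Rightarrow> real \<Rightarrow> real) \<Rightarrow> (real \<Rightarrow> real \<Rightarrow> real) \<Rightarrow> bool" where
  "C1_on S f ft fx \<longleftrightarrow>
     continuous_on S (\<lambda>(t,x). ft t x) \<and> continuous_on S (\<lambda>(t,x). fx t x) \<and>
     (\<forall>(t,x)\<in>S. ((\<lambda>(s,y). f s y) has_derivative (\<lambda>(h,k). ft t x * h + fx t x * k))
                   (at (t,x) within S))"

definition ip :: "real set \<Rightarrow> (real \<Rightarrow> real) \<Rightarrow> (real \<Rightarrow> real) \<Rightarrow> real" where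
  "ip \<omega> u v = (LINT x|lebesgue_on \<omega>. u x * v x)"

definition L2 :: "real set \<Rightarrow> (real \<Rightarrow> real) \<Rightarrow> bool" where
  "L2 \<omega> f \<longleftrightarrow> f \<in> borel_measurable (lebesgue_on \<omega>) \<and> integrable (lebesgue_on \<omega>) (\<lambda>x. (f x)^2)"

definition smooth_fun :: "(real \<Rightarrow> real) \<Rightarrow> bool" where
  "smooth_fun \<phi> \<longleftrightarrow> (\<forall>n x. ((deriv ^^ n) \<phi>) differentiable (at x))"

definition test_fun :: "real set \<Rightarrow> (real \<Rightarrow> real) \<Rightarrow> bool" where
  "test_fun \<omega> \<phi> \<longleftrightarrow> smooth_fun \<phi> \<and>
     (\<exists>K. compact K \<and> K \<subseteq> interior \<omega> \<and> (\<forall>x. x \<notin> K \<longrightarrow> \<phi> x = 0))"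

definition weak_deriv :: "real set \<Rightarrow> (real \<Rightarrow> real) \<Rightarrow> (real \<Rightarrow> real) \<Rightarrow> bool" where
  "weak_deriv \<omega> f g \<longleftrightarrow> integrable (lebesgue_on \<omega>) f \<and> integrable (lebesgue_on \<omega>) g \<and>
     (\<forall>\<phi>. test_fun \<omega> \<phi> \<longrightarrow> ip \<omega> f (deriv \<phi>) = - ip \<omega> g \<phi>)"

definition H1 :: "real set \<Rightarrow> (real \<Rightarrow> real) \<Rightarrow> bool" where
  "H1 \<omega> w \<longleftrightarrow> L2 \<omega> w \<and> (\<exists>g. L2 \<omega> g \<and> weak_deriv \<omega> w g)"

text \<open>H_0(div): L^2 with L^2 derivative g and vanishing boundary trace, expressed by
  Green's formula against all smooth functions (no boundary term).\<close>
definition H0div :: "real set \<Rightarrow> (real \<Rightarrow> real) \<Rightarrow> bool" where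
  "H0div \<omega> v \<longleftrightarrow> L2 \<omega> v \<and>
     (\<exists>g. L2 \<omega> g \<and> (\<forall>\<phi>. smooth_fun \<phi> \<longrightarrow> ip \<omega> v (deriv \<phi>) = - ip \<omega> g \<phi>))"

section \<open>Constitutive relations (arguments z = (rho, theta))\<close>

definition pres :: "(real \<times> real \<Rightarrow> real) \<Rightarrow> real \<times> real \<Rightarrow> real" where
  "pres P z = (fst z)^2 * pd1 P z"

definition eint :: "(real \<times> real \<Rightarrow> real) \<Rightarrow> (real \<Rightarrow> real) \<Rightarrow> real \<times> real \<Rightarrow> real" where
  "eint P Q z = P z - snd z * pd2 P z + Q (snd z)"

definition entr :: "(real \<times> real \<Rightarrow> real) \<Rightarrow> (real \<Rightarrow> real) \<Rightarrow> real \<times> real \<Rightarrow> real" where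
  "entr P Q z = (LBINT t=1..snd z. deriv Q t / t) - pd2 P z"

definition Etot :: "(real \<times> real \<Rightarrow> real) \<Rightarrow> (real \<Rightarrow> real) \<Rightarrow> real \<Rightarrow> real \<Rightarrow> real \<Rightarrow> real" where
  "Etot P Q r mm s = mm^2 / (2 * r) + r * eint P Q (r, s)"

end

theory Submission
  imports Defs
begin


lemma C1_on_facts:
  assumes "C1_on (U \<times> I) f ft fx" "t \<in> U" "x \<in> I"
  shows "((\<lambda>s. f s x) has_real_derivative ft t x) (at t within U)"
    "((\<lambda>y. f t y) has_real_derivative fx t x) (at x within I)"
proof -
  have D: "((\<lambda>(s,y). f s y) has_derivative (\<lambda>(h,k). ft t x * h + fx t x * k)) (at (t,x) within U \<times> I)"
    using assms unfolding C1_on_def by auto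
  have p1: "((\<lambda>s. (s,x)) has_derivative (\<lambda>h. (h,0))) (at t within U)"
    by (auto intro!: derivative_eq_intros)
  have "((\<lambda>s. (\<lambda>(s,y). f s y) (s,x)) has_derivative (\<lambda>h. (\<lambda>(h,k). ft t x * h + fx t x * k) (h,0))) (at t within U)"
    by (rule has_derivative_in_compose[OF p1]) (rule has_derivative_subset[OF D], use assms in auto)
  then show "((\<lambda>s. f s x) has_real_derivative ft t x) (at t within U)"
    by (simp add: has_field_derivative_def)
  have p2: "((\<lambda>y. (t,y)) has_derivative (\<lambda>k. (0,k))) (at x within I)"
    by (auto intro!: derivative_eq_intros)
  have "((\<lambda>y. (\<lambda>(s,y). f s y) (t,y)) has_derivative (\<lambda>k. (\<lambda>(h,k). ft t x * h + fx t x * k) (0,k))) (at x within I)"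
    by (rule has_derivative_in_compose[OF p2]) (rule has_derivative_subset[OF D], use assms in auto)
  then show "((\<lambda>y. f t y) has_real_derivative fx t x) (at x within I)"
    by (simp add: has_field_derivative_def)
qed

lemma C1_on_cont:
  assumes "C1_on S f ft fx"
  shows "continuous_on S (\<lambda>(t,x). f t x)" "continuous_on S (\<lambda>(t,x). ft t x)" "continuous_on S (\<lambda>(t,x). fx t x)"
proof -
  show "continuous_on S (\<lambda>(t,x). ft t x)" "continuous_on S (\<lambda>(t,x). fx t x)" using assms unfolding C1_on_def by auto
  show "continuous_on S (\<lambda>(t,x). f t x)"
    unfolding continuous_on_eq_continuous_within
  proof
    fix z assume "z \<in> S"
    then obtain t x where z: "z = (t,x)" "(t,x) \<in> S" by (cases z) auto
    then have "((\<lambda>(s,y). f s y) has_derivative (\<lambda>(h,k). ft t x * h + fx t x * k)) (at (t,x) within S)"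
      using assms unfolding C1_on_def by auto
    then show "continuous (at z within S) (\<lambda>(t,x). f t x)" using z has_derivative_continuous by blast
  qed
qed

lemma diff_partials:
  fixes f :: "real \<times> real \<Rightarrow> real"
  assumes "f differentiable (at z)"
  shows "(f has_derivative (\<lambda>(h,k). pd1 f z * h + pd2 f z * k)) (at z)"
proof -
  obtain D where D: "(f has_derivative D) (at z)" using assms unfolding differentiable_def by blast
  have lin: "linear D" using D has_derivative_linear by blast
  obtain a b where z: "z = (a,b)" by (cases z)
  have c1: "((\<lambda>r. (r, b)) has_derivative (\<lambda>h. (h,0))) (at a)" by (auto intro!: derivative_eq_intros)
  have "((\<lambda>r. f (r, b)) has_derivative (\<lambda>h. D (h,0))) (at a)"
    using has_derivative_compose[OF c1] D z by auto
  moreover have "(\<lambda>h. D (h,0)) = (\<lambda>h. D (1,0) * h)"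
  proof
    fix h :: real show "D (h,0) = D(1,0) * h" using linear_cmul[OF lin, of h "(1,0)"] by simp
  qed
  ultimately have "((\<lambda>r. f (r, b)) has_real_derivative D (1,0)) (at a)"
    by (simp add: has_field_derivative_def)
  then have e1: "pd1 f z = D (1,0)" unfolding pd1_def z by (simp add: DERIV_imp_deriv)
  have c2: "((\<lambda>r. (a, r)) has_derivative (\<lambda>h. (0,h))) (at b)" by (auto intro!: derivative_eq_intros)
  have "((\<lambda>r. f (a, r)) has_derivative (\<lambda>h. D (0,h))) (at b)"
    using has_derivative_compose[OF c2] D z by auto
  moreover have "(\<lambda>h. D (0,h)) = (\<lambda>h. D (0,1) * h)"
  proof
    fix h :: real show "D (0,h) = D(0,1) * h" using linear_cmul[OF lin, of h "(0,1)"] by simp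
  qed
  ultimately have "((\<lambda>r. f (a, r)) has_real_derivative D (0,1)) (at b)"
    by (simp add: has_field_derivative_def)
  then have e2: "pd2 f z = D (0,1)" unfolding pd2_def z by (simp add: DERIV_imp_deriv)
  have "D = (\<lambda>(h,k). pd1 f z * h + pd2 f z * k)"
  proof
    fix p :: "real \<times> real"
    obtain h k where p: "p = (h,k)" by (cases p)
    have "D (h,k) = D (h *\<^sub>R (1,0) + k *\<^sub>R (0,1))" by simp
    also have "\<dots> = h * D (1,0) + k * D (0,1)" by (simp only: linear_add[OF lin] linear_cmul[OF lin]) simp
    finally show "D p = (\<lambda>(h,k). pd1 f z * h + pd2 f z * k) p" using p e1 e2 by (simp add: mult.commute)
  qed
  then show ?thesis using D by simp
qed

lemma chain2:
  fixes f :: "real \<times> real \<Rightarrow> real"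
  assumes "f differentiable (at (a s0, b s0))"
    "(a has_real_derivative a') (at s0 within U)" "(b has_real_derivative b') (at s0 within U)"
  shows "((\<lambda>s. f (a s, b s)) has_real_derivative (pd1 f (a s0, b s0) * a' + pd2 f (a s0, b s0) * b')) (at s0 within U)"
proof -
  have p: "((\<lambda>s. (a s, b s)) has_derivative (\<lambda>h. (a' * h, b' * h))) (at s0 within U)"
    using assms(2,3) unfolding has_field_derivative_def by (intro has_derivative_Pair)
  have "((\<lambda>s. f (a s, b s)) has_derivative (\<lambda>h. (\<lambda>(h,k). pd1 f (a s0, b s0) * h + pd2 f (a s0, b s0) * k) (a' * h, b' * h))) (at s0 within U)"
    by (rule has_derivative_compose[OF p diff_partials[OF assms(1)]])
  then show ?thesis unfolding has_field_derivative_def by (rule has_derivative_eq_rhs) (auto simp: fun_eq_iff algebra_simps)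
qed



lemma cint: "continuous_on {a..b} f \<Longrightarrow> integrable (lebesgue_on {a..b}) (f::real\<Rightarrow>real)"
  by (rule continuous_imp_integrable_real)

lemma lint_eq_hk: "continuous_on {a..b} f \<Longrightarrow> (LINT x|lebesgue_on {a..b}. (f::real\<Rightarrow>real) x) = integral {a..b} f"
  by (rule lebesgue_integral_eq_integral[OF cint]) auto

lemma cL2: "continuous_on {a..b} f \<Longrightarrow> L2 {a..b} (f::real\<Rightarrow>real)"
  unfolding L2_def
  by (auto intro!: continuous_imp_measurable_on_sets_lebesgue cint continuous_intros)

lemma ftc_lint:
  fixes F f :: "real \<Rightarrow> real"
  assumes "a \<le> b" "\<And>x. x \<in> {a..b} \<Longrightarrow> (F has_real_derivative f x) (at x within {a..b})"
    "continuous_on {a..b} f"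
  shows "(LINT x|lebesgue_on {a..b}. f x) = F b - F a"
proof -
  have "(f has_integral (F b - F a)) {a..b}"
    by (rule fundamental_theorem_of_calculus[OF assms(1)])
       (use assms(2) in \<open>simp add: has_real_derivative_iff_has_vector_derivative\<close>)
  then show ?thesis using lint_eq_hk[OF assms(3)] by (simp add: integral_unique)
qed

lemma ibp0:
  fixes v g \<phi> \<phi>' :: "real \<Rightarrow> real"
  assumes "a \<le> b" "\<And>x. x \<in> {a..b} \<Longrightarrow> (v has_real_derivative g x) (at x within {a..b})"
    "\<And>x. x \<in> {a..b} \<Longrightarrow> (\<phi> has_real_derivative \<phi>' x) (at x within {a..b})"
    "continuous_on {a..b} g" "continuous_on {a..b} \<phi>'"
    "v b * \<phi> b = v a * \<phi> a"
  shows "ip {a..b} v \<phi>' = - ip {a..b} g \<phi>"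
proof -
  have cv: "continuous_on {a..b} v"
    using assms(2) by (meson DERIV_continuous continuous_at_imp_continuous_within continuous_on_eq_continuous_within)
  have cp: "continuous_on {a..b} \<phi>"
    using assms(3) by (meson DERIV_continuous continuous_on_eq_continuous_within)
  have "(LINT x|lebesgue_on {a..b}. g x * \<phi> x + v x * \<phi>' x) = v b * \<phi> b - v a * \<phi> a"
    by (rule ftc_lint[OF assms(1)])
       (auto intro!: derivative_eq_intros assms(2,3) continuous_intros cv cp assms(4,5))
  then have "(LINT x|lebesgue_on {a..b}. g x * \<phi> x) + (LINT x|lebesgue_on {a..b}. v x * \<phi>' x) = 0"
    using assms(6) by (subst Bochner_Integration.integral_add[symmetric]) (auto intro!: cint continuous_intros cv cp assms(4,5))
  then show ?thesis unfolding ip_def by linarith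
qed



lemma smooth_D:
  assumes "smooth_fun \<phi>"
  shows "(\<phi> has_real_derivative deriv \<phi> x) (at x)" "continuous_on X (deriv \<phi>)"
proof -
  have "\<phi> differentiable (at x)" for x using assms unfolding smooth_fun_def
    by (metis funpow_0)
  then show "(\<phi> has_real_derivative deriv \<phi> x) (at x)" by (simp add: DERIV_deriv_iff_real_differentiable)
  have "deriv \<phi> differentiable (at x)" for x using assms unfolding smooth_fun_def
    by (metis funpow_0 funpow_Suc_right o_apply One_nat_def)
  then show "continuous_on X (deriv \<phi>)"
    by (meson continuous_at_imp_continuous_on differentiable_imp_continuous_within)
qed

lemma test_bd:
  assumes "test_fun {a..b} \<phi>" shows "\<phi> a = 0" "\<phi> b = 0"
  using assms unfolding test_fun_def by auto

lemma C1_weak: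
  fixes v g :: "real \<Rightarrow> real"
  assumes "a \<le> b" "\<And>x. x \<in> {a..b} \<Longrightarrow> (v has_real_derivative g x) (at x within {a..b})"
    "continuous_on {a..b} g"
  shows "weak_deriv {a..b} v g" "H1 {a..b} v"
proof -
  have cv: "continuous_on {a..b} v"
    using assms(2) by (meson DERIV_continuous continuous_on_eq_continuous_within)
  have "ip {a..b} v (deriv \<phi>) = - ip {a..b} g \<phi>" if "test_fun {a..b} \<phi>" for \<phi>
  proof (rule ibp0[OF assms(1,2) _ assms(3)])
    have s: "smooth_fun \<phi>" using that unfolding test_fun_def by auto
    show "\<And>x. (\<phi> has_real_derivative deriv \<phi> x) (at x within {a..b})"
      using smooth_D(1)[OF s] by (rule has_field_derivative_at_within)
    show "continuous_on {a..b} (deriv \<phi>)" using smooth_D(2)[OF s] .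
    show "v b * \<phi> b = v a * \<phi> a" using test_bd[OF that] by simp
  qed auto
  then show w: "weak_deriv {a..b} v g" unfolding weak_deriv_def using cint[OF cv] cint[OF assms(3)] by auto
  show "H1 {a..b} v" unfolding H1_def using cL2[OF cv] cL2[OF assms(3)] w by auto
qed

lemma C1_H0div:
  fixes v g :: "real \<Rightarrow> real"
  assumes "a \<le> b" "\<And>x. x \<in> {a..b} \<Longrightarrow> (v has_real_derivative g x) (at x within {a..b})"
    "continuous_on {a..b} g" "v a = 0" "v b = 0"
  shows "H0div {a..b} v"
proof -
  have cv: "continuous_on {a..b} v"
    using assms(2) by (meson DERIV_continuous continuous_on_eq_continuous_within)
  have "ip {a..b} v (deriv \<phi>) = - ip {a..b} g \<phi>" if s: "smooth_fun \<phi>" for \<phi>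
  proof (rule ibp0[OF assms(1,2) _ assms(3)])
    show "\<And>x. (\<phi> has_real_derivative deriv \<phi> x) (at x within {a..b})"
      using smooth_D(1)[OF s] by (rule has_field_derivative_at_within)
    show "continuous_on {a..b} (deriv \<phi>)" using smooth_D(2)[OF s] .
    show "v b * \<phi> b = v a * \<phi> a" using assms(4,5) by simp
  qed auto
  then show ?thesis unfolding H0div_def using cL2[OF cv] cL2[OF assms(3)] by auto
qed



lemma cont_slice:
  assumes "continuous_on (U \<times> X) (\<lambda>(s,x). F s x)" "s \<in> U"
  shows "continuous_on X (\<lambda>x. F s x)"
proof -
  have "continuous_on X ((\<lambda>(s,x). F s x) \<circ> (\<lambda>x. (s,x)))"
    by (rule continuous_on_compose) (auto intro!: continuous_intros continuous_on_subset[OF assms(1)] simp: assms(2))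
  then show ?thesis by (simp add: o_def)
qed

lemma leib:
  fixes F Ft :: "real \<Rightarrow> real \<Rightarrow> real"
  assumes "convex U" "t \<in> U"
    "\<And>s x. s \<in> U \<Longrightarrow> x \<in> {a..b} \<Longrightarrow> ((\<lambda>s. F s x) has_real_derivative Ft s x) (at s within U)"
    "continuous_on (U \<times> {a..b}) (\<lambda>(s,x). F s x)"
    "continuous_on (U \<times> {a..b}) (\<lambda>(s,x). Ft s x)"
  shows "((\<lambda>s. LINT x|lebesgue_on {a..b}. F s x) has_real_derivative (LINT x|lebesgue_on {a..b}. Ft t x)) (at t within U)"
proof -
  have "((\<lambda>s. integral (cbox a b) (F s)) has_field_derivative integral (cbox a b) (Ft t)) (at t within U)"
  proof (rule leibniz_rule_field_derivative)
    show "\<And>x t. x \<in> U \<Longrightarrow> t \<in> cbox a b \<Longrightarrow> ((\<lambda>x. F x t) has_field_derivative Ft x t) (at x within U)"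
      using assms(3) by auto
    show "\<And>x. x \<in> U \<Longrightarrow> F x integrable_on cbox a b"
      using cont_slice[OF assms(4)] by (auto intro!: integrable_continuous_interval)
    show "continuous_on (U \<times> cbox a b) (\<lambda>(x, t). Ft x t)" using assms(5) by simp
  qed (use assms in auto)
  then have "((\<lambda>s. integral {a..b} (F s)) has_field_derivative integral {a..b} (Ft t)) (at t within U)"
    by simp
  moreover have "integral {a..b} (Ft t) = (LINT y|lebesgue_on {a..b}. Ft t y)"
    using lint_eq_hk[OF cont_slice[OF assms(5) assms(2)]] by simp
  ultimately have "((\<lambda>s. integral {a..b} (F s)) has_field_derivative (LINT y|lebesgue_on {a..b}. Ft t y)) (at t within U)"
    by simp
  then show ?thesis
  proof (rule has_field_derivative_transform_within[where d=1])
    show "x \<in> U \<Longrightarrow> integral {a..b} (F x) = (LINT y|lebesgue_on {a..b}. F x y)" for x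
      using lint_eq_hk[OF cont_slice[OF assms(4)]] by simp
  qed (use assms in auto)
qed



lemma partial1:
  fixes f :: "real \<times> real \<Rightarrow> real"
  assumes "f differentiable (at (a,b))"
  shows "((\<lambda>r. f (r,b)) has_real_derivative pd1 f (a,b)) (at a)"
proof -
  have "((\<lambda>s. f ((\<lambda>r. r) s, (\<lambda>r. b) s)) has_real_derivative pd1 f ((\<lambda>r. r) a, (\<lambda>r. b) a) * 1 + pd2 f ((\<lambda>r. r) a, (\<lambda>r. b) a) * 0) (at a within UNIV)"
    by (rule chain2) (auto simp: assms intro!: derivative_eq_intros)
  then show ?thesis by simp
qed

lemma partial2:
  fixes f :: "real \<times> real \<Rightarrow> real"
  assumes "f differentiable (at (a,b))"
  shows "((\<lambda>r. f (a,r)) has_real_derivative pd2 f (a,b)) (at b)"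
proof -
  have "((\<lambda>s. f ((\<lambda>r. a) s, (\<lambda>r. r) s)) has_real_derivative pd1 f ((\<lambda>r. a) b, (\<lambda>r. r) b) * 0 + pd2 f ((\<lambda>r. a) b, (\<lambda>r. r) b) * 1) (at b within UNIV)"
    by (rule chain2) (auto simp: assms intro!: derivative_eq_intros)
  then show ?thesis by simp
qed

lemma pd1_rhoP:
  fixes P :: "real \<times> real \<Rightarrow> real"
  assumes "P differentiable (at (a,b))"
  shows "pd1 (\<lambda>z. fst z * P z) (a,b) = P (a,b) + a * pd1 P (a,b)"
proof -
  have "((\<lambda>r. r * P (r,b)) has_real_derivative (1 * P (a,b) + a * pd1 P (a,b))) (at a)"
    using partial1[OF assms] by (auto intro!: derivative_eq_intros)
  then show ?thesis unfolding pd1_def by (simp add: DERIV_imp_deriv)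
qed

lemma eint_facts:
  fixes P :: "real \<times> real \<Rightarrow> real" and Q :: "real \<Rightarrow> real"
  assumes dP: "P differentiable (at (a,b))" and dP2: "pd2 P differentiable (at (a,b))"
    and dQ: "Q differentiable (at b)"
  shows "pd1 (eint P Q) (a,b) = pd1 P (a,b) - b * pd1 (pd2 P) (a,b)"
    "pd2 (eint P Q) (a,b) = deriv Q b - b * pd2 (pd2 P) (a,b)"
    "eint P Q differentiable (at (a,b))"
proof -
  have q: "(Q has_real_derivative deriv Q b) (at b)" using dQ by (simp add: DERIV_deriv_iff_real_differentiable)
  have "((\<lambda>r. P (r,b) - b * pd2 P (r,b) + Q b) has_real_derivative (pd1 P (a,b) - b * pd1 (pd2 P) (a,b))) (at a)"
    using partial1[OF dP] partial1[OF dP2] by (auto intro!: derivative_eq_intros)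
  then show "pd1 (eint P Q) (a,b) = pd1 P (a,b) - b * pd1 (pd2 P) (a,b)"
    unfolding pd1_def eint_def by (simp add: DERIV_imp_deriv)
  have "((\<lambda>r. P (a,r) - r * pd2 P (a,r) + Q r) has_real_derivative (pd2 P (a,b) - (1 * pd2 P (a,b) + b * pd2 (pd2 P) (a,b)) + deriv Q b)) (at b)"
    using partial2[OF dP] partial2[OF dP2] q by (auto intro!: derivative_eq_intros)
  then show "pd2 (eint P Q) (a,b) = deriv Q b - b * pd2 (pd2 P) (a,b)"
    unfolding pd2_def eint_def by (simp add: DERIV_imp_deriv)
  have "(Q \<circ> snd) differentiable (at (a,b))"
    by (rule differentiable_chain_at) (auto simp: dQ bounded_linear_imp_differentiable[OF bounded_linear_snd])
  then have dQs: "(\<lambda>z. Q (snd z)) differentiable (at (a,b))" by (simp add: o_def)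
  show "eint P Q differentiable (at (a,b))"
    unfolding eint_def[abs_def]
    by (intro differentiable_add differentiable_diff differentiable_mult dP dP2 dQs bounded_linear_imp_differentiable[OF bounded_linear_snd])
qed

lemma Phi_deriv:
  fixes g :: "real \<Rightarrow> real"
  assumes "continuous_on {0<..} g" "0 < th"
  shows "((\<lambda>u. LBINT y=1..u. g y) has_real_derivative g th) (at th)"
proof -
  define a where "a = min 1 th / 2"
  define b where "b = max 1 th + 1"
  have ab: "0 < a" "a \<le> 1" "1 \<le> b" "a < th" "th < b" using assms(2) unfolding a_def b_def by auto
  have "continuous_on {a..b} g" by (rule continuous_on_subset[OF assms(1)]) (use ab in auto)
  then have "((\<lambda>u. LBINT y=1..u. g y) has_vector_derivative g th) (at th within {a..b})"
    using interval_integral_FTC2[of a 1 b g th] ab by (simp add: one_ereal_def)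
  moreover have "at th within {a..b} = at th"
    by (rule at_within_interior) (use ab in auto)
  ultimately show ?thesis by (simp add: has_real_derivative_iff_has_vector_derivative)
qed



lemma contO:
  fixes F :: "real \<times> real \<Rightarrow> real"
  assumes "continuous_on Om F" "continuous_on X a" "continuous_on X b" "\<And>x. x \<in> X \<Longrightarrow> (a x, b x) \<in> Om"
  shows "continuous_on X (\<lambda>x. F (a x, b x))"
  by (rule continuous_on_compose2[OF assms(1)]) (use assms in \<open>auto intro!: continuous_intros\<close>)

lemma contG:
  fixes G :: "real \<Rightarrow> real"
  assumes "continuous_on Om G" "continuous_on X b" "\<And>x. x \<in> X \<Longrightarrow> b x \<in> Om"
  shows "continuous_on X (\<lambda>x. G (b x))"
  by (rule continuous_on_compose2[OF assms(1,2)]) (use assms in auto)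

lemma lint3:
  fixes f g h :: "'a \<Rightarrow> real"
  assumes "integrable M f" "integrable M g" "integrable M h"
  shows "(LINT x|M. f x) - (LINT x|M. g x) + (LINT x|M. h x) = (LINT x|M. f x - g x + h x)"
  using assms by simp

lemma lint2:
  fixes f g :: "'a \<Rightarrow> real"
  assumes "integrable M f" "integrable M g"
  shows "(LINT x|M. f x) + (LINT x|M. g x) = (LINT x|M. f x + g x)"
  using assms by simp

lemma alg_E:
  fixes r th rt tt mm mt mx tx p0 p1 p2 q0 e1 e2 :: real
  assumes "r \<noteq> 0" "th \<noteq> 0"
  shows "mm * mt / r - mm^2 * rt / (2 * r^2) + rt * (p0 - th * p2 + q0) + r * (e1 * rt + e2 * tt)
   = ((mt / r - mm / (2 * r^2) * rt) * mm - (mm^2 / (2 * r^2) + (p0 + r * p1)) * mx + (mm / (2 * r^2) * mx - p2 * tx) * mm)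
   + ((r * (e1 * rt + e2 * tt) - r^2 * p1 / r * rt) * (th / th) - (q0 - th * p2) * mx + (mm * p2 * tx) * (th / th))
   + (rt * ((p0 - th * p2 + q0) + r^2 * p1 / r) + mx * ((p0 - th * p2 + q0) + r^2 * p1 / r))"
  using assms by (simp add: field_simps power2_eq_square)

lemma alg_S:
  fixes r th rt tt mm mx tx p1 p2 p12 p22 q0 q1 ph :: real
  assumes "r \<noteq> 0" "th \<noteq> 0"
  shows "rt * (ph - p2) + r * (q1 / th * tt - p12 * rt - p22 * tt)
   = ((r * ((p1 - th * p12) * rt + (q1 - th * p22) * tt) - r^2 * p1 / r * rt) * (1 / th)
       - (q0 - th * p2) * ((mx * th - mm * tx) / th^2) + (mm * p2 * tx) * (1 / th))
   + (rt * (ph - p2) + mx * (ph - p2))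
   + (mx * (q0 / th - ph) + mm * ((q1 * tx * th - q0 * tx) / th^2 - q1 / th * tx))"
  using assms by (simp add: field_simps power2_eq_square)



theorem lemma3:
  fixes v1 v2 T cv :: real and P :: "real \<times> real \<Rightarrow> real" and Q :: "real \<Rightarrow> real"
    and rho m th rho_t rho_x m_t m_x th_t th_x :: "real \<Rightarrow> real \<Rightarrow> real"
  assumes "v1 < v2" and "0 < T"
    and "Ck 3 ({0<..} \<times> {0<..}) P" and "Ck1 2 {0<..} Q" and "0 < cv"
    and "\<forall>r>0. \<forall>s>0. pd1 P (r, s) \<ge> 0"
    and "\<forall>r>0. \<forall>s>0. pd1 (\<lambda>z. fst z * pd1 P z) (r, s) \<ge> 0"
    and "\<forall>r>0. \<forall>s>0. deriv Q s - s * pd2 (pd2 P) (r, s) \<ge> cv"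
    and "C1_on ({0<..T} \<times> {v1..v2}) rho rho_t rho_x"
    and "C1_on ({0<..T} \<times> {v1..v2}) m m_t m_x"
    and "C1_on ({0<..T} \<times> {v1..v2}) th th_t th_x"
    and "\<forall>t\<in>{0<..T}. \<forall>x\<in>{v1..v2}. 0 < rho t x \<and> 0 < th t x"
    and "\<forall>t\<in>{0<..T}. m t v1 = 0 \<and> m t v2 = 0"
    and "\<forall>t\<in>{0<..T}. \<forall>q. L2 {v1..v2} q \<longrightarrow>
           ip {v1..v2} (\<lambda>x. rho_t t x) q + ip {v1..v2} (\<lambda>x. m_x t x) q = 0"
    and "\<forall>t\<in>{0<..T}. \<forall>v. H0div {v1..v2} v \<longrightarrow> (\<forall>g. weak_deriv {v1..v2} v g \<longrightarrow>
           ip {v1..v2} (\<lambda>x. m_t t x / rho t x - m t x / (2 * (rho t x)^2) * rho_t t x) v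
         - ip {v1..v2} (\<lambda>x. (m t x)^2 / (2 * (rho t x)^2)
                             + pd1 (\<lambda>z. fst z * P z) (rho t x, th t x)) g
         + ip {v1..v2} (\<lambda>x. m t x / (2 * (rho t x)^2) * m_x t x
                             - pd2 P (rho t x, th t x) * th_x t x) v = 0)"
    and "\<forall>t\<in>{0<..T}. \<forall>w. H1 {v1..v2} w \<longrightarrow>
           (\<forall>h. weak_deriv {v1..v2} (\<lambda>x. m t x * (w x / th t x)) h \<longrightarrow>
           ip {v1..v2} (\<lambda>x. rho t x * (pd1 (eint P Q) (rho t x, th t x) * rho_t t x
                                       + pd2 (eint P Q) (rho t x, th t x) * th_t t x)
                             - pres P (rho t x, th t x) / rho t x * rho_t t x)
                       (\<lambda>x. w x / th t x)
         - ip {v1..v2} (\<lambda>x. Q (th t x) - th t x * pd2 P (rho t x, th t x)) h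
         + ip {v1..v2} (\<lambda>x. m t x * pd2 P (rho t x, th t x) * th_x t x)
                       (\<lambda>x. w x / th t x) = 0)"
  shows "\<forall>t\<in>{0<..T}.
           ((\<lambda>s. LINT x|lebesgue_on {v1..v2}. rho s x) has_real_derivative 0) (at t within {0<..T})
         \<and> ((\<lambda>s. LINT x|lebesgue_on {v1..v2}. Etot P Q (rho s x) (m s x) (th s x))
               has_real_derivative 0) (at t within {0<..T})
         \<and> ((\<lambda>s. LINT x|lebesgue_on {v1..v2}. rho s x * entr P Q (rho s x, th s x))
               has_real_derivative 0) (at t within {0<..T})"
proof -
  let ?I = "{v1..v2}" and ?U = "{0<..T}"
  define Om where "Om = ({0<..} \<times> {0<..} :: (real \<times> real) set)"
  have openO: "open Om" unfolding Om_def by (intro open_Times open_greaterThan)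
  have ab: "v1 \<le> v2" using assms(1) by simp
  have conv: "convex ?U" by (simp add: convex_real_interval)
  have Ck3: "P differentiable_on Om" "pd1 P differentiable_on Om" "pd2 P differentiable_on Om"
     "pd1 (pd2 P) differentiable_on Om" "pd2 (pd2 P) differentiable_on Om"
    using assms(3) unfolding Om_def by (simp_all add: eval_nat_numeral)
  have CkQ: "Q differentiable_on {0<..}" "deriv Q differentiable_on {0<..}"
    using assms(4) by (simp_all add: eval_nat_numeral)
  have dP: "\<And>z. z \<in> Om \<Longrightarrow> P differentiable (at z)"
    using Ck3(1) openO differentiable_on_eq_differentiable_at by blast
  have dP2: "\<And>z. z \<in> Om \<Longrightarrow> pd2 P differentiable (at z)"
    using Ck3(3) openO differentiable_on_eq_differentiable_at by blast
  have dQ: "\<And>s. 0 < s \<Longrightarrow> Q differentiable (at s)"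
    using CkQ(1) differentiable_on_eq_differentiable_at by (metis greaterThan_iff open_greaterThan)
  have cP: "continuous_on Om P" "continuous_on Om (pd1 P)" "continuous_on Om (pd2 P)"
     "continuous_on Om (pd1 (pd2 P))" "continuous_on Om (pd2 (pd2 P))"
    using Ck3 differentiable_imp_continuous_on by blast+
  have cQ: "continuous_on {0<..} Q" "continuous_on {0<..} (deriv Q)"
    using CkQ differentiable_imp_continuous_on by blast+
  have cg: "continuous_on {0<..} (\<lambda>y. deriv Q y / y)"
    by (intro continuous_intros cQ) auto
  define Phi where "Phi = (\<lambda>u::real. LBINT y=1..u. deriv Q y / y)"
  have dPhi: "\<And>u. 0 < u \<Longrightarrow> (Phi has_real_derivative deriv Q u / u) (at u)"
    unfolding Phi_def using Phi_deriv[OF cg] by simp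
  have cPhi: "continuous_on {0<..} Phi"
    by (rule continuous_at_imp_continuous_on) (use dPhi DERIV_isCont in auto)
  have entr_eq: "\<And>z. entr P Q z = Phi (snd z) - pd2 P z" unfolding entr_def Phi_def by simp
  have cEn: "continuous_on Om (entr P Q)"
  proof -
    have "continuous_on Om (\<lambda>z. Phi (snd z) - pd2 P z)"
      by (intro continuous_intros cP contG[OF cPhi]) (auto simp: Om_def)
    then show ?thesis unfolding entr_eq[abs_def] .
  qed
  have eF: "\<And>a b. (a,b) \<in> Om \<Longrightarrow> pd1 (eint P Q) (a,b) = pd1 P (a,b) - b * pd1 (pd2 P) (a,b)
       \<and> pd2 (eint P Q) (a,b) = deriv Q b - b * pd2 (pd2 P) (a,b) \<and> eint P Q differentiable (at (a,b))"
    using eint_facts dP dP2 dQ unfolding Om_def by auto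
  have cE: "continuous_on Om (eint P Q)"
  proof (rule continuous_at_imp_continuous_on, rule ballI)
    fix z assume "z \<in> Om"
    then have "eint P Q differentiable (at z)" using eF[of "fst z" "snd z"] by simp
    then show "isCont (eint P Q) z" by (rule differentiable_imp_continuous_within)
  qed
  have cE1: "continuous_on Om (pd1 (eint P Q))"
  proof -
    have "continuous_on Om (\<lambda>z. pd1 P z - snd z * pd1 (pd2 P) z)"
      by (intro continuous_intros cP)
    then show ?thesis by (rule continuous_on_cong[THEN iffD1, rotated 2]) (use eF in auto)
  qed
  have cE2: "continuous_on Om (pd2 (eint P Q))"
  proof -
    have "continuous_on Om (\<lambda>z. deriv Q (snd z) - snd z * pd2 (pd2 P) z)"
      by (intro continuous_intros cP contG[OF cQ(2)]) (auto simp: Om_def)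
    then show ?thesis by (rule continuous_on_cong[THEN iffD1, rotated 2]) (use eF in auto)
  qed
  have cRP: "continuous_on Om (pd1 (\<lambda>z. fst z * P z))"
  proof -
    have "continuous_on Om (\<lambda>z. P z + fst z * pd1 P z)"
      by (intro continuous_intros cP)
    then show ?thesis by (rule continuous_on_cong[THEN iffD1, rotated 2]) (use pd1_rhoP dP in auto)
  qed
  have cPr: "continuous_on Om (pres P)"
    unfolding pres_def[abs_def] by (intro continuous_intros cP)
  have cQs: "continuous_on Om (\<lambda>z. Q (snd z))"
    by (intro contG[OF cQ(1)] continuous_intros) (auto simp: Om_def)
  have fr: "\<And>s x. s \<in> ?U \<Longrightarrow> x \<in> ?I \<Longrightarrow> ((\<lambda>s. rho s x) has_real_derivative rho_t s x) (at s within ?U)"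
     "\<And>s x. s \<in> ?U \<Longrightarrow> x \<in> ?I \<Longrightarrow> ((\<lambda>y. rho s y) has_real_derivative rho_x s x) (at x within ?I)"
    using C1_on_facts[OF assms(9)] by auto
  have fm: "\<And>s x. s \<in> ?U \<Longrightarrow> x \<in> ?I \<Longrightarrow> ((\<lambda>s. m s x) has_real_derivative m_t s x) (at s within ?U)"
     "\<And>s x. s \<in> ?U \<Longrightarrow> x \<in> ?I \<Longrightarrow> ((\<lambda>y. m s y) has_real_derivative m_x s x) (at x within ?I)"
    using C1_on_facts[OF assms(10)] by auto
  have fth: "\<And>s x. s \<in> ?U \<Longrightarrow> x \<in> ?I \<Longrightarrow> ((\<lambda>s. th s x) has_real_derivative th_t s x) (at s within ?U)"
     "\<And>s x. s \<in> ?U \<Longrightarrow> x \<in> ?I \<Longrightarrow> ((\<lambda>y. th s y) has_real_derivative th_x s x) (at x within ?I)"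
    using C1_on_facts[OF assms(11)] by auto
  note cr = C1_on_cont[OF assms(9)] and cm = C1_on_cont[OF assms(10)] and cth = C1_on_cont[OF assms(11)]
  have pos: "\<And>s x. s \<in> ?U \<Longrightarrow> x \<in> ?I \<Longrightarrow> 0 < rho s x"  "\<And>s x. s \<in> ?U \<Longrightarrow> x \<in> ?I \<Longrightarrow> 0 < th s x"
    using assms(12) by auto
  have inO: "\<And>s x. s \<in> ?U \<Longrightarrow> x \<in> ?I \<Longrightarrow> (rho s x, th s x) \<in> Om"
    using pos unfolding Om_def by auto
  have cS: "continuous_on (?U \<times> ?I) (\<lambda>p. rho (fst p) (snd p))"
     "continuous_on (?U \<times> ?I) (\<lambda>p. rho_t (fst p) (snd p))"
     "continuous_on (?U \<times> ?I) (\<lambda>p. m (fst p) (snd p))"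
     "continuous_on (?U \<times> ?I) (\<lambda>p. m_t (fst p) (snd p))"
     "continuous_on (?U \<times> ?I) (\<lambda>p. th (fst p) (snd p))"
     "continuous_on (?U \<times> ?I) (\<lambda>p. th_t (fst p) (snd p))"
    using cr cm cth by (simp_all add: case_prod_beta')
  have cSO: "continuous_on (?U \<times> ?I) (\<lambda>p. F (rho (fst p) (snd p), th (fst p) (snd p)))"
    if "continuous_on Om F" for F :: "real \<times> real \<Rightarrow> real"
    by (rule contO[OF that cS(1) cS(5)]) (use inO in auto)
  have cSG: "continuous_on (?U \<times> ?I) (\<lambda>p. G (th (fst p) (snd p)))"
    if "continuous_on {0<..} G" for G :: "real \<Rightarrow> real"
    by (rule contG[OF that cS(5)]) (use pos in auto)
  show ?thesis
  proof (intro ballI conjI)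
    fix t assume t: "t \<in> ?U"
    have ci: "continuous_on ?I (\<lambda>x. rho t x)" "continuous_on ?I (\<lambda>x. rho_t t x)" "continuous_on ?I (\<lambda>x. rho_x t x)"
      "continuous_on ?I (\<lambda>x. m t x)" "continuous_on ?I (\<lambda>x. m_t t x)" "continuous_on ?I (\<lambda>x. m_x t x)"
      "continuous_on ?I (\<lambda>x. th t x)" "continuous_on ?I (\<lambda>x. th_t t x)" "continuous_on ?I (\<lambda>x. th_x t x)"
      using cont_slice[OF cr(1) t] cont_slice[OF cr(2) t] cont_slice[OF cr(3) t]
        cont_slice[OF cm(1) t] cont_slice[OF cm(2) t] cont_slice[OF cm(3) t]
        cont_slice[OF cth(1) t] cont_slice[OF cth(2) t] cont_slice[OF cth(3) t] by auto
    have cIO: "continuous_on ?I (\<lambda>x. F (rho t x, th t x))" if "continuous_on Om F" for F :: "real \<times> real \<Rightarrow> real"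
      by (rule contO[OF that ci(1) ci(7)]) (use inO t in auto)
    have cIG: "continuous_on ?I (\<lambda>x. G (th t x))" if "continuous_on {0<..} G" for G :: "real \<Rightarrow> real"
      by (rule contG[OF that ci(7)]) (use pos t in auto)
    have nzI: "\<And>x. x \<in> ?I \<Longrightarrow> rho t x \<noteq> 0" "\<And>x. x \<in> ?I \<Longrightarrow> th t x \<noteq> 0"
      using pos t by (auto simp: less_imp_neq[symmetric])
    have posI: "\<And>x. x \<in> ?I \<Longrightarrow> 0 < rho t x" "\<And>x. x \<in> ?I \<Longrightarrow> 0 < th t x"
      using pos t by auto
    have mx0: "(LINT x|lebesgue_on ?I. m_x t x) = 0"
      using ftc_lint[OF ab, of "\<lambda>y. m t y" "\<lambda>x. m_x t x"] fm(2) t ci(6) assms(13) by auto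
    have Hq: "ip ?I (\<lambda>x. rho_t t x) q + ip ?I (\<lambda>x. m_x t x) q = 0" if "continuous_on ?I q" for q
      using assms(14) t cL2[OF that] by blast
    show "((\<lambda>s. LINT x|lebesgue_on ?I. rho s x) has_real_derivative 0) (at t within ?U)"
    proof -
      have "((\<lambda>s. LINT x|lebesgue_on ?I. rho s x) has_real_derivative (LINT x|lebesgue_on ?I. rho_t t x)) (at t within ?U)"
        by (rule leib[OF conv t]) (use fr cr in auto)
      moreover have "(LINT x|lebesgue_on ?I. rho_t t x) = 0"
        using Hq[of "\<lambda>x. 1"] mx0 unfolding ip_def by simp
      ultimately show ?thesis by simp
    qed
    show "((\<lambda>s. LINT x|lebesgue_on ?I. Etot P Q (rho s x) (m s x) (th s x)) has_real_derivative 0) (at t within ?U)"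
    proof -
      define FtE where "FtE = (\<lambda>s x. m s x * m_t s x / rho s x - (m s x)^2 * rho_t s x / (2 * (rho s x)^2)
        + rho_t s x * eint P Q (rho s x, th s x)
        + rho s x * (pd1 (eint P Q) (rho s x, th s x) * rho_t s x + pd2 (eint P Q) (rho s x, th s x) * th_t s x))"
      have "((\<lambda>s. LINT x|lebesgue_on ?I. Etot P Q (rho s x) (m s x) (th s x)) has_real_derivative (LINT x|lebesgue_on ?I. FtE t x)) (at t within ?U)"
      proof (rule leib[OF conv t])
        fix s x assume sx: "s \<in> ?U" "x \<in> ?I"
        have de: "((\<lambda>s. eint P Q (rho s x, th s x)) has_real_derivative
            (pd1 (eint P Q) (rho s x, th s x) * rho_t s x + pd2 (eint P Q) (rho s x, th s x) * th_t s x)) (at s within ?U)"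
          by (rule chain2[where a="\<lambda>s. rho s x" and b="\<lambda>s. th s x", OF _ fr(1)[OF sx] fth(1)[OF sx]])
             (use eF inO[OF sx] in auto)
        have r0: "rho s x \<noteq> 0" using pos(1)[OF sx] by simp
        show "((\<lambda>s. Etot P Q (rho s x) (m s x) (th s x)) has_real_derivative FtE s x) (at s within ?U)"
          unfolding Etot_def FtE_def
          using de fr(1)[OF sx] fm(1)[OF sx] r0
          apply (auto intro!: derivative_eq_intros)
          apply (simp add: field_simps power2_eq_square)
          done
      next
        show "continuous_on (?U \<times> ?I) (\<lambda>(s, x). Etot P Q (rho s x) (m s x) (th s x))"
          unfolding Etot_def case_prod_beta'
          by (intro continuous_intros cS cSO cE) (auto dest: pos)
        show "continuous_on (?U \<times> ?I) (\<lambda>(s, x). FtE s x)"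
          unfolding FtE_def case_prod_beta'
          by (intro continuous_intros cS cSO cE cE1 cE2) (auto dest: pos)
      qed
      moreover have "(LINT x|lebesgue_on ?I. FtE t x) = 0"
      proof -
        have H0: "H0div ?I (\<lambda>x. m t x)" by (rule C1_H0div[OF ab]) (use fm(2) t ci(6) assms(13) in auto)
        have W0: "weak_deriv ?I (\<lambda>x. m t x) (\<lambda>x. m_x t x)" by (rule C1_weak(1)[OF ab]) (use fm(2) t ci(6) in auto)
        have HM: "ip ?I (\<lambda>x. m_t t x / rho t x - m t x / (2 * (rho t x)^2) * rho_t t x) (\<lambda>x. m t x) - ip ?I (\<lambda>x. (m t x)^2 / (2 * (rho t x)^2) + pd1 (\<lambda>z. fst z * P z) (rho t x, th t x)) (\<lambda>x. m_x t x) + ip ?I (\<lambda>x. m t x / (2 * (rho t x)^2) * m_x t x - pd2 P (rho t x, th t x) * th_x t x) (\<lambda>x. m t x) = 0"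
          by (rule assms(15)[rule_format, OF t H0 W0])
        have H1: "H1 ?I (\<lambda>x. th t x)" by (rule C1_weak(2)[OF ab]) (use fth(2) t ci(9) in auto)
        have W1: "weak_deriv ?I (\<lambda>x. m t x * (th t x / th t x)) (\<lambda>x. m_x t x)"
        proof (rule C1_weak(1)[OF ab _ ci(6)])
          fix x assume x: "x \<in> ?I"
          show "((\<lambda>x. m t x * (th t x / th t x)) has_real_derivative m_x t x) (at x within ?I)"
            by (rule has_field_derivative_transform_within[OF fm(2)[OF t x], where d=1]) (use x nzI in auto)
        qed
        have HE: "ip ?I (\<lambda>x. rho t x * (pd1 (eint P Q) (rho t x, th t x) * rho_t t x + pd2 (eint P Q) (rho t x, th t x) * th_t t x) - pres P (rho t x, th t x) / rho t x * rho_t t x) (\<lambda>x. th t x / th t x) - ip ?I (\<lambda>x. Q (th t x) - th t x * pd2 P (rho t x, th t x)) (\<lambda>x. m_x t x) + ip ?I (\<lambda>x. m t x * pd2 P (rho t x, th t x) * th_x t x) (\<lambda>x. th t x / th t x) = 0"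
          by (rule assms(16)[rule_format, OF t H1 W1])
        have HMa: "ip ?I (\<lambda>x. rho_t t x) (\<lambda>x. eint P Q (rho t x, th t x) + pres P (rho t x, th t x) / rho t x) + ip ?I (\<lambda>x. m_x t x) (\<lambda>x. eint P Q (rho t x, th t x) + pres P (rho t x, th t x) / rho t x) = 0"
          by (rule Hq) (intro cint continuous_intros ci cIO cIG cP cQ cRP cE cE1 cE2 cPr cEn; simp add: nzI)
        have I1: "(LINT x|lebesgue_on ?I. (m_t t x / rho t x - m t x / (2 * (rho t x)^2) * rho_t t x) * m t x - ((m t x)^2 / (2 * (rho t x)^2) + pd1 (\<lambda>z. fst z * P z) (rho t x, th t x)) * m_x t x + (m t x / (2 * (rho t x)^2) * m_x t x - pd2 P (rho t x, th t x) * th_x t x) * m t x) = 0"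
        proof -
          have "(LINT x|lebesgue_on ?I. (m_t t x / rho t x - m t x / (2 * (rho t x)^2) * rho_t t x) * m t x - ((m t x)^2 / (2 * (rho t x)^2) + pd1 (\<lambda>z. fst z * P z) (rho t x, th t x)) * m_x t x + (m t x / (2 * (rho t x)^2) * m_x t x - pd2 P (rho t x, th t x) * th_x t x) * m t x) = ip ?I (\<lambda>x. m_t t x / rho t x - m t x / (2 * (rho t x)^2) * rho_t t x) (\<lambda>x. m t x) - ip ?I (\<lambda>x. (m t x)^2 / (2 * (rho t x)^2) + pd1 (\<lambda>z. fst z * P z) (rho t x, th t x)) (\<lambda>x. m_x t x) + ip ?I (\<lambda>x. m t x / (2 * (rho t x)^2) * m_x t x - pd2 P (rho t x, th t x) * th_x t x) (\<lambda>x. m t x)"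
            unfolding ip_def by (rule lint3[symmetric]; (intro cint continuous_intros ci cIO cIG cP cQ cRP cE cE1 cE2 cPr cEn; simp add: nzI))
          with HM show ?thesis by simp
        qed
        have I2: "(LINT x|lebesgue_on ?I. (rho t x * (pd1 (eint P Q) (rho t x, th t x) * rho_t t x + pd2 (eint P Q) (rho t x, th t x) * th_t t x) - pres P (rho t x, th t x) / rho t x * rho_t t x) * (th t x / th t x) - (Q (th t x) - th t x * pd2 P (rho t x, th t x)) * m_x t x + (m t x * pd2 P (rho t x, th t x) * th_x t x) * (th t x / th t x)) = 0"
        proof -
          have "(LINT x|lebesgue_on ?I. (rho t x * (pd1 (eint P Q) (rho t x, th t x) * rho_t t x + pd2 (eint P Q) (rho t x, th t x) * th_t t x) - pres P (rho t x, th t x) / rho t x * rho_t t x) * (th t x / th t x) - (Q (th t x) - th t x * pd2 P (rho t x, th t x)) * m_x t x + (m t x * pd2 P (rho t x, th t x) * th_x t x) * (th t x / th t x)) = ip ?I (\<lambda>x. rho t x * (pd1 (eint P Q) (rho t x, th t x) * rho_t t x + pd2 (eint P Q) (rho t x, th t x) * th_t t x) - pres P (rho t x, th t x) / rho t x * rho_t t x) (\<lambda>x. th t x / th t x) - ip ?I (\<lambda>x. Q (th t x) - th t x * pd2 P (rho t x, th t x)) (\<lambda>x. m_x t x) + ip ?I (\<lambda>x. m t x * pd2 P (rho t x, th t x) * th_x t x) (\<lambda>x. th t x / th t x)"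
            unfolding ip_def by (rule lint3[symmetric]; (intro cint continuous_intros ci cIO cIG cP cQ cRP cE cE1 cE2 cPr cEn; simp add: nzI))
          with HE show ?thesis by simp
        qed
        have I3: "(LINT x|lebesgue_on ?I. rho_t t x * (eint P Q (rho t x, th t x) + pres P (rho t x, th t x) / rho t x) + m_x t x * (eint P Q (rho t x, th t x) + pres P (rho t x, th t x) / rho t x)) = 0"
        proof -
          have "(LINT x|lebesgue_on ?I. rho_t t x * (eint P Q (rho t x, th t x) + pres P (rho t x, th t x) / rho t x) + m_x t x * (eint P Q (rho t x, th t x) + pres P (rho t x, th t x) / rho t x)) = ip ?I (\<lambda>x. rho_t t x) (\<lambda>x. eint P Q (rho t x, th t x) + pres P (rho t x, th t x) / rho t x) + ip ?I (\<lambda>x. m_x t x) (\<lambda>x. eint P Q (rho t x, th t x) + pres P (rho t x, th t x) / rho t x)"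
            unfolding ip_def by (rule lint2[symmetric]; (intro cint continuous_intros ci cIO cIG cP cQ cRP cE cE1 cE2 cPr cEn; simp add: nzI))
          with HMa show ?thesis by simp
        qed
        have "(LINT x|lebesgue_on ?I. FtE t x) = (LINT x|lebesgue_on ?I. ((m_t t x / rho t x - m t x / (2 * (rho t x)^2) * rho_t t x) * m t x - ((m t x)^2 / (2 * (rho t x)^2) + pd1 (\<lambda>z. fst z * P z) (rho t x, th t x)) * m_x t x + (m t x / (2 * (rho t x)^2) * m_x t x - pd2 P (rho t x, th t x) * th_x t x) * m t x) + ((rho t x * (pd1 (eint P Q) (rho t x, th t x) * rho_t t x + pd2 (eint P Q) (rho t x, th t x) * th_t t x) - pres P (rho t x, th t x) / rho t x * rho_t t x) * (th t x / th t x) - (Q (th t x) - th t x * pd2 P (rho t x, th t x)) * m_x t x + (m t x * pd2 P (rho t x, th t x) * th_x t x) * (th t x / th t x)) + (rho_t t x * (eint P Q (rho t x, th t x) + pres P (rho t x, th t x) / rho t x) + m_x t x * (eint P Q (rho t x, th t x) + pres P (rho t x, th t x) / rho t x)))"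
        proof (rule Bochner_Integration.integral_cong[OF refl])
          fix x assume "x \<in> space (lebesgue_on ?I)"
          then have x: "x \<in> ?I" by simp
          have rP: "pd1 (\<lambda>z. fst z * P z) (rho t x, th t x) = P (rho t x, th t x) + rho t x * pd1 P (rho t x, th t x)"
            by (rule pd1_rhoP[OF dP[OF inO[OF t x]]])
          show "FtE t x = ((m_t t x / rho t x - m t x / (2 * (rho t x)^2) * rho_t t x) * m t x - ((m t x)^2 / (2 * (rho t x)^2) + pd1 (\<lambda>z. fst z * P z) (rho t x, th t x)) * m_x t x + (m t x / (2 * (rho t x)^2) * m_x t x - pd2 P (rho t x, th t x) * th_x t x) * m t x) + ((rho t x * (pd1 (eint P Q) (rho t x, th t x) * rho_t t x + pd2 (eint P Q) (rho t x, th t x) * th_t t x) - pres P (rho t x, th t x) / rho t x * rho_t t x) * (th t x / th t x) - (Q (th t x) - th t x * pd2 P (rho t x, th t x)) * m_x t x + (m t x * pd2 P (rho t x, th t x) * th_x t x) * (th t x / th t x)) + (rho_t t x * (eint P Q (rho t x, th t x) + pres P (rho t x, th t x) / rho t x) + m_x t x * (eint P Q (rho t x, th t x) + pres P (rho t x, th t x) / rho t x))"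
            unfolding FtE_def rP
            by (simp only: eint_def pres_def fst_conv snd_conv, rule alg_E) (use nzI x in auto)
        qed
        also have "\<dots> = (LINT x|lebesgue_on ?I. (m_t t x / rho t x - m t x / (2 * (rho t x)^2) * rho_t t x) * m t x - ((m t x)^2 / (2 * (rho t x)^2) + pd1 (\<lambda>z. fst z * P z) (rho t x, th t x)) * m_x t x + (m t x / (2 * (rho t x)^2) * m_x t x - pd2 P (rho t x, th t x) * th_x t x) * m t x) + (LINT x|lebesgue_on ?I. (rho t x * (pd1 (eint P Q) (rho t x, th t x) * rho_t t x + pd2 (eint P Q) (rho t x, th t x) * th_t t x) - pres P (rho t x, th t x) / rho t x * rho_t t x) * (th t x / th t x) - (Q (th t x) - th t x * pd2 P (rho t x, th t x)) * m_x t x + (m t x * pd2 P (rho t x, th t x) * th_x t x) * (th t x / th t x)) + (LINT x|lebesgue_on ?I. rho_t t x * (eint P Q (rho t x, th t x) + pres P (rho t x, th t x) / rho t x) + m_x t x * (eint P Q (rho t x, th t x) + pres P (rho t x, th t x) / rho t x))"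
          by (rule trans[OF Bochner_Integration.integral_add Bochner_Integration.integral_add[THEN arg_cong[where f="\<lambda>u. u + _"]]]; (intro cint continuous_intros ci cIO cIG cP cQ cRP cE cE1 cE2 cPr cEn; simp add: nzI))
        finally show ?thesis using I1 I2 I3 by simp
      qed
      ultimately show ?thesis by simp
    qed
    show "((\<lambda>s. LINT x|lebesgue_on ?I. rho s x * entr P Q (rho s x, th s x)) has_real_derivative 0) (at t within ?U)"
    proof -
      define FtS where "FtS = (\<lambda>s x. rho_t s x * entr P Q (rho s x, th s x) + rho s x * (deriv Q (th s x) / th s x * th_t s x
          - pd1 (pd2 P) (rho s x, th s x) * rho_t s x - pd2 (pd2 P) (rho s x, th s x) * th_t s x))"
      have "((\<lambda>s. LINT x|lebesgue_on ?I. rho s x * entr P Q (rho s x, th s x)) has_real_derivative (LINT x|lebesgue_on ?I. FtS t x)) (at t within ?U)"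
      proof (rule leib[OF conv t])
        fix s x assume sx: "s \<in> ?U" "x \<in> ?I"
        have d2: "((\<lambda>s. pd2 P (rho s x, th s x)) has_real_derivative
            (pd1 (pd2 P) (rho s x, th s x) * rho_t s x + pd2 (pd2 P) (rho s x, th s x) * th_t s x)) (at s within ?U)"
          by (rule chain2[where a="\<lambda>s. rho s x" and b="\<lambda>s. th s x", OF _ fr(1)[OF sx] fth(1)[OF sx]])
             (use dP2 inO[OF sx] in auto)
        have dph: "((\<lambda>s. Phi (th s x)) has_real_derivative (deriv Q (th s x) / th s x * th_t s x)) (at s within ?U)"
          by (rule DERIV_chain2[OF dPhi fth(1)[OF sx]]) (use pos(2)[OF sx] in simp)
        have t0: "th s x \<noteq> 0" using pos(2)[OF sx] by simp
        show "((\<lambda>s. rho s x * entr P Q (rho s x, th s x)) has_real_derivative FtS s x) (at s within ?U)"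
          unfolding FtS_def entr_eq fst_conv snd_conv
          using d2 dph fr(1)[OF sx] t0
          apply (auto intro!: derivative_eq_intros)
          done
      next
        show "continuous_on (?U \<times> ?I) (\<lambda>(s, x). rho s x * entr P Q (rho s x, th s x))"
          unfolding case_prod_beta'
          by (intro continuous_intros cS cSO cEn)
        show "continuous_on (?U \<times> ?I) (\<lambda>(s, x). FtS s x)"
          unfolding FtS_def case_prod_beta'
          by (intro continuous_intros cS cSO cSG cEn cP cQ) (auto dest: pos)
      qed
      moreover have "(LINT x|lebesgue_on ?I. FtS t x) = 0"
      proof -
        have H1: "H1 ?I (\<lambda>x. 1)" by (rule C1_weak(2)[OF ab, of _ "\<lambda>x. 0"]) auto
        have W1: "weak_deriv ?I (\<lambda>x. m t x * (1 / th t x)) (\<lambda>x. (m_x t x * th t x - m t x * th_x t x) / (th t x)^2)"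
        proof (rule C1_weak(1)[OF ab])
          fix x assume x: "x \<in> ?I"
          show "((\<lambda>x. m t x * (1 / th t x)) has_real_derivative (m_x t x * th t x - m t x * th_x t x) / (th t x)^2) (at x within ?I)"
            using fm(2)[OF t x] fth(2)[OF t x] nzI[OF x]
            apply (auto intro!: derivative_eq_intros)
            apply (simp add: field_simps power2_eq_square)
            done
        qed (intro cint continuous_intros ci cIO cIG cP cQ cRP cE cE1 cE2 cPr cEn cPhi; simp add: nzI)
        have HE: "ip ?I (\<lambda>x. rho t x * (pd1 (eint P Q) (rho t x, th t x) * rho_t t x + pd2 (eint P Q) (rho t x, th t x) * th_t t x) - pres P (rho t x, th t x) / rho t x * rho_t t x) (\<lambda>x. 1 / th t x) - ip ?I (\<lambda>x. Q (th t x) - th t x * pd2 P (rho t x, th t x)) (\<lambda>x. (m_x t x * th t x - m t x * th_x t x) / (th t x)^2) + ip ?I (\<lambda>x. m t x * pd2 P (rho t x, th t x) * th_x t x) (\<lambda>x. 1 / th t x) = 0"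
          by (rule assms(16)[rule_format, OF t H1 W1])
        have HMa: "ip ?I (\<lambda>x. rho_t t x) (\<lambda>x. entr P Q (rho t x, th t x)) + ip ?I (\<lambda>x. m_x t x) (\<lambda>x. entr P Q (rho t x, th t x)) = 0"
          by (rule Hq) (intro cint continuous_intros ci cIO cIG cP cQ cRP cE cE1 cE2 cPr cEn cPhi; simp add: nzI)
        have I1: "(LINT x|lebesgue_on ?I. (rho t x * (pd1 (eint P Q) (rho t x, th t x) * rho_t t x + pd2 (eint P Q) (rho t x, th t x) * th_t t x) - pres P (rho t x, th t x) / rho t x * rho_t t x) * (1 / th t x) - (Q (th t x) - th t x * pd2 P (rho t x, th t x)) * ((m_x t x * th t x - m t x * th_x t x) / (th t x)^2) + (m t x * pd2 P (rho t x, th t x) * th_x t x) * (1 / th t x)) = 0"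
        proof -
          have "(LINT x|lebesgue_on ?I. (rho t x * (pd1 (eint P Q) (rho t x, th t x) * rho_t t x + pd2 (eint P Q) (rho t x, th t x) * th_t t x) - pres P (rho t x, th t x) / rho t x * rho_t t x) * (1 / th t x) - (Q (th t x) - th t x * pd2 P (rho t x, th t x)) * ((m_x t x * th t x - m t x * th_x t x) / (th t x)^2) + (m t x * pd2 P (rho t x, th t x) * th_x t x) * (1 / th t x)) = ip ?I (\<lambda>x. rho t x * (pd1 (eint P Q) (rho t x, th t x) * rho_t t x + pd2 (eint P Q) (rho t x, th t x) * th_t t x) - pres P (rho t x, th t x) / rho t x * rho_t t x) (\<lambda>x. 1 / th t x) - ip ?I (\<lambda>x. Q (th t x) - th t x * pd2 P (rho t x, th t x)) (\<lambda>x. (m_x t x * th t x - m t x * th_x t x) / (th t x)^2) + ip ?I (\<lambda>x. m t x * pd2 P (rho t x, th t x) * th_x t x) (\<lambda>x. 1 / th t x)"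
            unfolding ip_def by (rule lint3[symmetric]; (intro cint continuous_intros ci cIO cIG cP cQ cRP cE cE1 cE2 cPr cEn cPhi; simp add: nzI))
          with HE show ?thesis by simp
        qed
        have I2: "(LINT x|lebesgue_on ?I. rho_t t x * (entr P Q (rho t x, th t x)) + m_x t x * (entr P Q (rho t x, th t x))) = 0"
        proof -
          have "(LINT x|lebesgue_on ?I. rho_t t x * (entr P Q (rho t x, th t x)) + m_x t x * (entr P Q (rho t x, th t x))) = ip ?I (\<lambda>x. rho_t t x) (\<lambda>x. entr P Q (rho t x, th t x)) + ip ?I (\<lambda>x. m_x t x) (\<lambda>x. entr P Q (rho t x, th t x))"
            unfolding ip_def by (rule lint2[symmetric]; (intro cint continuous_intros ci cIO cIG cP cQ cRP cE cE1 cE2 cPr cEn cPhi; simp add: nzI))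
          with HMa show ?thesis by simp
        qed
        have I3: "(LINT x|lebesgue_on ?I. m_x t x * (Q (th t x) / th t x - Phi (th t x)) + m t x * ((deriv Q (th t x) * th_x t x * th t x - Q (th t x) * th_x t x) / (th t x)^2 - deriv Q (th t x) / th t x * th_x t x)) = 0"
        proof -
          have "(LINT x|lebesgue_on ?I. m_x t x * (Q (th t x) / th t x - Phi (th t x)) + m t x * ((deriv Q (th t x) * th_x t x * th t x - Q (th t x) * th_x t x) / (th t x)^2 - deriv Q (th t x) / th t x * th_x t x)) = m t v2 * (Q (th t v2) / th t v2 - Phi (th t v2)) - m t v1 * (Q (th t v1) / th t v1 - Phi (th t v1))"
          proof (rule ftc_lint[OF ab])
            fix x assume x: "x \<in> ?I"
            have q1: "(Q has_real_derivative deriv Q (th t x)) (at (th t x))"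
              using dQ[OF posI(2)[OF x]] by (simp add: DERIV_deriv_iff_real_differentiable)
            have p1: "(Phi has_real_derivative deriv Q (th t x) / th t x) (at (th t x))"
              using dPhi[OF posI(2)[OF x]] .
            have cq: "((\<lambda>y. Q (th t y)) has_real_derivative deriv Q (th t x) * th_x t x) (at x within ?I)"
              by (rule DERIV_chain2[where f=Q, OF q1 fth(2)[OF t x]])
            have cp: "((\<lambda>y. Phi (th t y)) has_real_derivative deriv Q (th t x) / th t x * th_x t x) (at x within ?I)"
              by (rule DERIV_chain2[where f=Phi, OF p1 fth(2)[OF t x]])
            show "((\<lambda>y. m t y * (Q (th t y) / th t y - Phi (th t y))) has_real_derivative m_x t x * (Q (th t x) / th t x - Phi (th t x)) + m t x * ((deriv Q (th t x) * th_x t x * th t x - Q (th t x) * th_x t x) / (th t x)^2 - deriv Q (th t x) / th t x * th_x t x)) (at x within ?I)"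
              using fm(2)[OF t x] fth(2)[OF t x] nzI[OF x] cq cp
              apply (auto intro!: derivative_eq_intros)
              apply (simp add: field_simps power2_eq_square)
              done
          next
            show "continuous_on ?I (\<lambda>x. m_x t x * (Q (th t x) / th t x - Phi (th t x)) + m t x * ((deriv Q (th t x) * th_x t x * th t x - Q (th t x) * th_x t x) / (th t x)^2 - deriv Q (th t x) / th t x * th_x t x))" by (intro cint continuous_intros ci cIO cIG cP cQ cRP cE cE1 cE2 cPr cEn cPhi; simp add: nzI)
          qed
          then show ?thesis using assms(13) t by simp
        qed
        have "(LINT x|lebesgue_on ?I. FtS t x) = (LINT x|lebesgue_on ?I. ((rho t x * (pd1 (eint P Q) (rho t x, th t x) * rho_t t x + pd2 (eint P Q) (rho t x, th t x) * th_t t x) - pres P (rho t x, th t x) / rho t x * rho_t t x) * (1 / th t x) - (Q (th t x) - th t x * pd2 P (rho t x, th t x)) * ((m_x t x * th t x - m t x * th_x t x) / (th t x)^2) + (m t x * pd2 P (rho t x, th t x) * th_x t x) * (1 / th t x)) + (rho_t t x * (entr P Q (rho t x, th t x)) + m_x t x * (entr P Q (rho t x, th t x))) + (m_x t x * (Q (th t x) / th t x - Phi (th t x)) + m t x * ((deriv Q (th t x) * th_x t x * th t x - Q (th t x) * th_x t x) / (th t x)^2 - deriv Q (th t x) / th t x * th_x t x)))"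
        proof (rule Bochner_Integration.integral_cong[OF refl])
          fix x assume "x \<in> space (lebesgue_on ?I)"
          then have x: "x \<in> ?I" by simp
          have e12: "pd1 (eint P Q) (rho t x, th t x) = pd1 P (rho t x, th t x) - th t x * pd1 (pd2 P) (rho t x, th t x)"
             "pd2 (eint P Q) (rho t x, th t x) = deriv Q (th t x) - th t x * pd2 (pd2 P) (rho t x, th t x)"
            using eF[OF inO[OF t x]] by auto
          show "FtS t x = ((rho t x * (pd1 (eint P Q) (rho t x, th t x) * rho_t t x + pd2 (eint P Q) (rho t x, th t x) * th_t t x) - pres P (rho t x, th t x) / rho t x * rho_t t x) * (1 / th t x) - (Q (th t x) - th t x * pd2 P (rho t x, th t x)) * ((m_x t x * th t x - m t x * th_x t x) / (th t x)^2) + (m t x * pd2 P (rho t x, th t x) * th_x t x) * (1 / th t x)) + (rho_t t x * (entr P Q (rho t x, th t x)) + m_x t x * (entr P Q (rho t x, th t x))) + (m_x t x * (Q (th t x) / th t x - Phi (th t x)) + m t x * ((deriv Q (th t x) * th_x t x * th t x - Q (th t x) * th_x t x) / (th t x)^2 - deriv Q (th t x) / th t x * th_x t x))"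
            unfolding FtS_def e12 entr_eq
            by (simp only: pres_def fst_conv snd_conv, rule alg_S) (use nzI x in auto)
        qed
        also have "\<dots> = (LINT x|lebesgue_on ?I. (rho t x * (pd1 (eint P Q) (rho t x, th t x) * rho_t t x + pd2 (eint P Q) (rho t x, th t x) * th_t t x) - pres P (rho t x, th t x) / rho t x * rho_t t x) * (1 / th t x) - (Q (th t x) - th t x * pd2 P (rho t x, th t x)) * ((m_x t x * th t x - m t x * th_x t x) / (th t x)^2) + (m t x * pd2 P (rho t x, th t x) * th_x t x) * (1 / th t x)) + (LINT x|lebesgue_on ?I. rho_t t x * (entr P Q (rho t x, th t x)) + m_x t x * (entr P Q (rho t x, th t x))) + (LINT x|lebesgue_on ?I. m_x t x * (Q (th t x) / th t x - Phi (th t x)) + m t x * ((deriv Q (th t x) * th_x t x * th t x - Q (th t x) * th_x t x) / (th t x)^2 - deriv Q (th t x) / th t x * th_x t x))"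
          by (rule trans[OF Bochner_Integration.integral_add Bochner_Integration.integral_add[THEN arg_cong[where f="\<lambda>u. u + _"]]]; (intro cint continuous_intros ci cIO cIG cP cQ cRP cE cE1 cE2 cPr cEn cPhi; simp add: nzI))
        finally show ?thesis using I1 I2 I3 by simp
      qed
      ultimately show ?thesis by simp
    qed
  qed
qed

end
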